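(* Let $f: (\mathbb{R}^{+})^n \to (\mathbb{R}^{+})^n$ be homogeneous and monotone. All super-eigenspaces $S^\lambda(f) = \{x \in (\mathbb{R}^{+})^n : f(x) \le \lambda x\}$, $\lambda \in \mathbb{R}^{+}$, are bounded in the Hilbert projective metric if and only if $f$ is indecomposable.
   Context: Homogeneous: $f(\lambda x) = \lambda f(x)$ for all $\lambda > 0$; monotone: $x \le y$ componentwise implies $f(x) \le f(y)$. For $u>0$ and $J \subseteq \{1,\dots,n\}$, $u_J$ has entries $u$ on $J$ and $1$ off $J$. $f$ is decomposable if there is a partition $\{1,\dots,n\} = I \cup J$ with $I \cap J = \emptyset$, $I, J$ nonempty, such that $\lim_{u\to\infty} f_i(u_J) < \infty$ for all $i \in I$; indecomposable otherwise. Hilbert projective metric: $d_H(y,z) = \max_i \log(y_i/z_i) - \min_i \log(y_i/z_i)$; a set $A$ is bounded if $\sup_{y,z\in A} d_H(y,z)<\infty$. *)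

theory Defs
  imports "HOL-Analysis.Analysis"
begin

text \<open>Vectors in (R^+)^n are modelled as elements of real^'n with all entries positive.\<close>

definition pos_vec :: "real^'n \<Rightarrow> bool" where
  "pos_vec x \<longleftrightarrow> (\<forall>i. x $ i > 0)"

definition homogeneous_map :: "(real^'n \<Rightarrow> real^'n) \<Rightarrow> bool" where
  "homogeneous_map f \<longleftrightarrow> (\<forall>x c. pos_vec x \<and> c > 0 \<longrightarrow> f (c *\<^sub>R x) = c *\<^sub>R f x)"

definition monotone_pos_map :: "(real^'n \<Rightarrow> real^'n) \<Rightarrow> bool" where
  "monotone_pos_map f \<longleftrightarrow> (\<forall>x y. pos_vec x \<and> pos_vec y \<and> (\<forall>i. x $ i \<le> y $ i)
      \<longrightarrow> (\<forall>i. f x $ i \<le> f y $ i))"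

definition uvec :: "real \<Rightarrow> 'n set \<Rightarrow> real^'n" where
  "uvec u J = (\<chi> i. if i \<in> J then u else 1)"

definition decomposable :: "(real^'n \<Rightarrow> real^'n) \<Rightarrow> bool" where
  "decomposable f \<longleftrightarrow> (\<exists>I J. I \<union> J = UNIV \<and> I \<inter> J = {} \<and> I \<noteq> {} \<and> J \<noteq> {} \<and>
      (\<forall>i\<in>I. \<exists>L::real. ((\<lambda>u. f (uvec u J) $ i) \<longlongrightarrow> L) at_top))"

definition indecomposable :: "(real^'n \<Rightarrow> real^'n) \<Rightarrow> bool" where
  "indecomposable f \<longleftrightarrow> \<not> decomposable f"

definition hilbert_dist :: "real^'n \<Rightarrow> real^'n \<Rightarrow> real" where
  "hilbert_dist y z = (MAX i. ln (y $ i / z $ i)) - (MIN i. ln (y $ i / z $ i))"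

definition hilbert_bounded :: "(real^'n) set \<Rightarrow> bool" where
  "hilbert_bounded A \<longleftrightarrow> (\<exists>B. \<forall>y\<in>A. \<forall>z\<in>A. hilbert_dist y z \<le> B)"

definition super_eigenspace :: "(real^'n \<Rightarrow> real^'n) \<Rightarrow> real \<Rightarrow> (real^'n) set" where
  "super_eigenspace f c = {x. pos_vec x \<and> (\<forall>i. f x $ i \<le> c * x $ i)}"

end

theory Submission
  imports Defs
begin

lemma uvec_nth[simp]: "uvec u J $ i = (if i \<in> J then u else 1)"
  by (simp add: uvec_def)

lemma pos_uvec: "u > 0 \<Longrightarrow> pos_vec (uvec u J)"
  by (simp add: pos_vec_def)

lemma mono_lim:
  fixes g :: "real \<Rightarrow> real"
  assumes mono: "\<And>u v. 1 \<le> u \<Longrightarrow> u \<le> v \<Longrightarrow> g u \<le> g v"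
    and bnd: "\<And>u. 1 \<le> u \<Longrightarrow> g u \<le> K"
  shows "\<exists>L. (g \<longlongrightarrow> L) at_top"
proof -
  define L where "L = (SUP u\<in>{1..}. g u)"
  have bdd: "bdd_above (g ` {1..})" using bnd by (auto intro!: bdd_aboveI)
  have le: "g u \<le> L" if "1 \<le> u" for u
    unfolding L_def using bdd that by (intro cSUP_upper) auto
  have "(g \<longlongrightarrow> L) at_top"
  proof (rule order_tendstoI)
    fix a assume "a < L"
    then obtain u0 where u0: "u0 \<in> {1..}" "a < g u0"
      unfolding L_def using less_cSUP_iff[OF _ bdd] by (metis atLeast_iff empty_iff order_refl)
    show "\<forall>\<^sub>F u in at_top. a < g u"
      using eventually_ge_at_top[of u0] 
      by eventually_elim (use u0 mono in force)
  next
    fix a assume "L < a"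
    show "\<forall>\<^sub>F u in at_top. g u < a"
      using eventually_ge_at_top[of 1]
      by eventually_elim (use le \<open>L < a\<close> in force)
  qed
  then show ?thesis by blast
qed

lemma mono_le_lim:
  fixes g :: "real \<Rightarrow> real"
  assumes mono: "\<And>u v. 1 \<le> u \<Longrightarrow> u \<le> v \<Longrightarrow> g u \<le> g v"
    and lim: "(g \<longlongrightarrow> L) at_top" and "1 \<le> u"
  shows "g u \<le> L"
proof (rule tendsto_lowerbound[OF lim])
  show "\<forall>\<^sub>F v in at_top. g u \<le> g v"
    using eventually_ge_at_top[of u] by eventually_elim (use mono \<open>1 \<le> u\<close> in auto)
qed simp


lemma uvec_mono:
  assumes f: "monotone_pos_map f" and "0 < u" "u \<le> v"
  shows "f (uvec u J) $ i \<le> f (uvec v J) $ i"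
  using f assms unfolding monotone_pos_map_def by (auto simp: pos_uvec)

lemma dir1:
  fixes f :: "real^'n \<Rightarrow> real^'n"
  assumes hom: "homogeneous_map f" and mon: "monotone_pos_map f"
    and dec: "decomposable f"
  shows "\<exists>c>0. \<not> hilbert_bounded (super_eigenspace f c)"
proof -
  obtain I J where IJ: "I \<union> J = UNIV" "I \<inter> J = {}" "I \<noteq> {}" "J \<noteq> {}"
    and lim: "\<forall>i\<in>I. \<exists>L::real. ((\<lambda>u. f (uvec u J) $ i) \<longlongrightarrow> L) at_top"
    using dec unfolding decomposable_def by blast
  from lim obtain L where L: "\<And>i. i \<in> I \<Longrightarrow> ((\<lambda>u. f (uvec u J) $ i) \<longlongrightarrow> L i) at_top"
    by metis
  define one :: "real^'n" where "one = uvec 1 J"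
  define c where "c = 1 + (\<Sum>i\<in>I. \<bar>L i\<bar>) + (\<Sum>i\<in>UNIV. \<bar>f one $ i\<bar>)"
  have cpos: "c > 0" unfolding c_def by (smt (verit) sum_nonneg abs_ge_zero)
  have Lc: "L i \<le> c" if "i \<in> I" for i
  proof -
    have "\<bar>L i\<bar> \<le> (\<Sum>i\<in>I. \<bar>L i\<bar>)" using that by (intro member_le_sum) auto
    moreover have "0 \<le> (\<Sum>i\<in>UNIV. \<bar>f one $ i\<bar>)" by (simp add: sum_nonneg)
    ultimately show ?thesis unfolding c_def by linarith
  qed
  have fc: "f one $ i \<le> c" for i
  proof -
    have "\<bar>f one $ i\<bar> \<le> (\<Sum>i\<in>UNIV. \<bar>f one $ i\<bar>)" by (intro member_le_sum) auto
    moreover have "0 \<le> (\<Sum>i\<in>I. \<bar>L i\<bar>)" by (simp add: sum_nonneg)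
    ultimately show ?thesis unfolding c_def by linarith
  qed
  have mem: "uvec u J \<in> super_eigenspace f c" if u: "1 \<le> u" for u
    unfolding super_eigenspace_def
  proof (intro CollectI conjI allI)
    show "pos_vec (uvec u J)" using u by (intro pos_uvec) auto
    fix i
    show "f (uvec u J) $ i \<le> c * uvec u J $ i"
    proof (cases "i \<in> J")
      case False
      then have "i \<in> I" using IJ by auto
      have "f (uvec u J) $ i \<le> L i"
        by (rule mono_le_lim[OF _ L[OF \<open>i \<in> I\<close>] u]) (rule uvec_mono[OF mon], auto)
      then show ?thesis using Lc[OF \<open>i \<in> I\<close>] False by simp
    next
      case True
      have "pos_vec one" unfolding one_def by (simp add: pos_uvec)
      have le: "\<forall>k. uvec u J $ k \<le> (u *\<^sub>R one) $ k" using u unfolding one_def by auto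
      have "f (uvec u J) $ i \<le> f (u *\<^sub>R one) $ i"
        using mon le u \<open>pos_vec one\<close> unfolding monotone_pos_map_def
        by (metis pos_uvec pos_vec_def zero_less_one order_less_le_trans)
      also have "\<dots> = u * f one $ i"
        using hom \<open>pos_vec one\<close> u unfolding homogeneous_map_def by simp
      also have "\<dots> \<le> u * c" using fc u by (intro mult_left_mono) auto
      finally show ?thesis using True by (simp add: mult.commute)
    qed
  qed
  have "\<not> hilbert_bounded (super_eigenspace f c)"
  proof
    assume "hilbert_bounded (super_eigenspace f c)"
    then obtain B where B: "\<And>y z. y \<in> super_eigenspace f c \<Longrightarrow> z \<in> super_eigenspace f c \<Longrightarrow> hilbert_dist y z \<le> B"
      unfolding hilbert_bounded_def by blast
    define u where "u = exp (\<bar>B\<bar> + 1)"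
    have u1: "1 \<le> u" unfolding u_def by simp
    obtain j where "j \<in> J" using IJ by auto
    obtain i where "i \<in> I" using IJ by auto
    then have "i \<notin> J" using IJ by auto
    define g where "g = (\<lambda>k. ln (uvec u J $ k / uvec 1 J $ k))"
    have "g j \<le> (MAX k. g k)" by (rule Max_ge) auto
    moreover have "(MIN k. g k) \<le> g i" by (rule Min_le) auto
    moreover have "g j = \<bar>B\<bar> + 1" "g i = 0" using \<open>j \<in> J\<close> \<open>i \<notin> J\<close> unfolding g_def u_def by auto
    ultimately have "hilbert_dist (uvec u J) (uvec 1 J) \<ge> \<bar>B\<bar> + 1"
      unfolding hilbert_dist_def g_def by linarith
    moreover have "hilbert_dist (uvec u J) (uvec 1 J) \<le> B" using B mem u1 by auto
    ultimately show False by linarith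
  qed
  then show ?thesis using cpos by blast
qed


lemma indec_unb:
  fixes f :: "real^'n \<Rightarrow> real^'n"
  assumes mon: "monotone_pos_map f" and ind: "indecomposable f"
    and J: "J \<noteq> {}" "J \<noteq> UNIV"
  shows "\<exists>i. i \<notin> J \<and> (\<forall>K. \<exists>u\<ge>1. f (uvec u J) $ i > K)"
proof (rule ccontr)
  assume "\<not> ?thesis"
  then have "\<forall>i\<in>-J. \<exists>K. \<forall>u\<ge>1. f (uvec u J) $ i \<le> K" by (auto simp: not_less)
  then have "\<forall>i\<in>-J. \<exists>L::real. ((\<lambda>u. f (uvec u J) $ i) \<longlongrightarrow> L) at_top"
    using mono_lim[where g="\<lambda>u. f (uvec u J) $ _"] uvec_mono[OF mon] 
    by (metis (no_types, lifting) order_less_le_trans zero_less_one)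
  then have "decomposable f" unfolding decomposable_def using J
    by (intro exI[of _ "-J"] exI[of _ J]) auto
  then show False using ind unfolding indecomposable_def by blast
qed


lemma dir2_bound:
  fixes f :: "real^'n \<Rightarrow> real^'n"
  assumes hom: "homogeneous_map f" and mon: "monotone_pos_map f"
    and ind: "indecomposable f" and c: "c > 0"
  shows "\<exists>T\<ge>1. \<forall>x\<in>super_eigenspace f c. \<forall>i. x $ i \<le> T * (MIN k. x $ k)"
proof -
  define G where "G J K = (SOME u. u \<ge> 1 \<and> (\<exists>i. i \<notin> J \<and> f (uvec u J) $ i > K))"
    for J :: "'n set" and K :: real
  have G: "G J K \<ge> 1 \<and> (\<exists>i. i \<notin> J \<and> f (uvec (G J K) J) $ i > K)"
    if JJ: "J \<noteq> {}" "J \<noteq> UNIV" for J K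
  proof -
    obtain i where "i \<notin> J" "\<forall>K. \<exists>u\<ge>1. f (uvec u J) $ i > K"
      using indec_unb[OF mon ind JJ] by blast
    then have "\<exists>u. u \<ge> 1 \<and> (\<exists>i. i \<notin> J \<and> f (uvec u J) $ i > K)" by blast
    then show ?thesis unfolding G_def by (rule someI_ex)
  qed
  define H where "H K = max K (Max ((\<lambda>J. G J (c*K)) ` UNIV))" for K
  have H_ge: "K \<le> H K" for K unfolding H_def by simp
  have G_le: "G J (c*K) \<le> H K" for J K
    unfolding H_def by (rule max.coboundedI2, rule Max_ge) auto
  define T where "T k = (H^^k) 1" for k
  have T_Suc: "T (Suc k) = H (T k)" for k unfolding T_def by simp
  have T_ge1: "T k \<ge> 1" for k
    by (induction k) (auto simp: T_Suc T_def intro: order_trans[OF _ H_ge])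
  have "\<forall>x\<in>super_eigenspace f c. \<forall>i. x $ i \<le> T CARD('n) * (MIN k. x $ k)"
  proof (intro ballI allI)
    fix x i assume x: "x \<in> super_eigenspace f c"
    then have px: "pos_vec x" and fx: "\<And>i. f x $ i \<le> c * x $ i"
      unfolding super_eigenspace_def by auto
    define m where "m = (MIN k. x $ k)"
    have m_le: "m \<le> x $ k" for k unfolding m_def by (rule Min_le) auto
    obtain i0 where i0: "x $ i0 = m"
      unfolding m_def using Min_in[of "range (\<lambda>k. x $ k)"] by (metis UNIV_not_empty empty_is_image finite_imageI finite imageE)
    have mpos: "m > 0" using px i0 unfolding pos_vec_def by metis
    define S where "S k = {i. x $ i \<le> T k * m}" for k
    have claim: "min (k+1) CARD('n) \<le> card (S k)" for k
    proof (induction k)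
      case 0
      have "i0 \<in> S 0" unfolding S_def T_def using i0 by simp
      then have "card (S 0) \<ge> 1"
        by (metis card_0_eq empty_iff finite less_one not_le)
      then show ?case by simp
    next
      case (Suc k)
      have sub: "S k \<subseteq> S (Suc k)" unfolding S_def T_Suc
        using H_ge[of "T k"] mpos by (auto intro: order_trans mult_right_mono)
      show ?case
      proof (cases "S k = UNIV")
        case True
        then have "S (Suc k) = UNIV" using sub by auto
        then show ?thesis by simp
      next
        case False
        define J where "J = - S k"
        have "i0 \<in> S k" unfolding S_def using i0 T_ge1[of k] mpos by simp
        then have J: "J \<noteq> {}" "J \<noteq> UNIV" using False unfolding J_def by auto
        define u where "u = G J (c * T k)"
        obtain i where i: "i \<notin> J" "f (uvec u J) $ i > c * T k" and u1: "u \<ge> 1"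
          using G[OF J] unfolding u_def by blast
        have "\<exists>j\<in>J. x $ j < u * m"
        proof (rule ccontr)
          assume "\<not> ?thesis"
          then have ge: "\<forall>k. (m *\<^sub>R uvec u J) $ k \<le> x $ k"
            using m_le by (auto simp: not_less mult.commute)
          have pu: "pos_vec (m *\<^sub>R uvec u J)" using mpos u1 by (simp add: pos_vec_def)
          have "f (m *\<^sub>R uvec u J) $ i \<le> f x $ i"
            using mon pu px ge unfolding monotone_pos_map_def by blast
          also have "f (m *\<^sub>R uvec u J) = m *\<^sub>R f (uvec u J)"
            using hom mpos u1 pos_uvec[of u J] unfolding homogeneous_map_def by auto
          finally have "m * f (uvec u J) $ i \<le> f x $ i" by simp
          moreover have "m * (c * T k) < m * f (uvec u J) $ i"
            using i mpos by simp
          moreover have "x $ i \<le> T k * m" using i unfolding J_def S_def by auto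
          then have "c * x $ i \<le> c * (T k * m)" using c by simp
          ultimately show False using fx[of i] by (simp add: algebra_simps)
        qed
        then obtain j where j: "j \<in> J" "x $ j < u * m" by blast
        have "u \<le> T (Suc k)" unfolding u_def T_Suc by (rule G_le)
        then have "u * m \<le> T (Suc k) * m" using mpos by (intro mult_right_mono) auto
        then have "j \<in> S (Suc k)" using j unfolding S_def by simp
        then have "insert j (S k) \<subseteq> S (Suc k)" using sub by auto
        then have "card (insert j (S k)) \<le> card (S (Suc k))" by (intro card_mono) auto
        moreover have "card (insert j (S k)) = card (S k) + 1"
          using j unfolding J_def by simp
        ultimately show ?thesis using Suc.IH by linarith
      qed
    qed
    have "card (UNIV :: 'n set) \<le> card (S CARD('n))" using claim[of "CARD('n)"] by simp
    then have "S CARD('n) = UNIV" by (metis card_seteq finite subset_UNIV)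
    then show "x $ i \<le> T CARD('n) * m" unfolding S_def by auto
  qed
  then show ?thesis using T_ge1 by blast
qed


lemma dist_bound:
  fixes x y :: "real^'n"
  assumes T: "T \<ge> 1" and px: "pos_vec x" and py: "pos_vec y"
    and bx: "\<And>i. x $ i \<le> T * (MIN k. x $ k)" and by': "\<And>i. y $ i \<le> T * (MIN k. y $ k)"
  shows "hilbert_dist x y \<le> 2 * ln T"
proof -
  define mx where "mx = (MIN k. x $ k)"
  define my where "my = (MIN k. y $ k)"
  have mxl: "mx \<le> x $ k" for k unfolding mx_def by (rule Min_le) auto
  have myl: "my \<le> y $ k" for k unfolding my_def by (rule Min_le) auto
  have mxp: "mx > 0" unfolding mx_def using px by (subst Min_gr_iff) (auto simp: pos_vec_def)
  have myp: "my > 0" unfolding my_def using py by (subst Min_gr_iff) (auto simp: pos_vec_def)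
  define g where "g k = ln (x $ k / y $ k)" for k
  have gk: "g k = ln (x $ k) - ln (y $ k)" for k
    unfolding g_def
  proof -
    have "0 < x $ k" "0 < y $ k" using px py unfolding pos_vec_def by auto
    then show "ln (x $ k / y $ k) = ln (x $ k) - ln (y $ k)" by (rule ln_divide_pos)
  qed
  have up: "g k \<le> ln T + ln mx - ln my" for k
  proof -
    have "ln (x $ k) \<le> ln (T * mx)" using bx[of k] px mxp T unfolding mx_def[symmetric]
      by (simp add: pos_vec_def)
    moreover have "ln my \<le> ln (y $ k)" using myl[of k] myp by simp
    ultimately show ?thesis using gk[of k] T mxp by (simp add: ln_mult)
  qed
  have lo: "ln mx - ln T - ln my \<le> g k" for k
  proof -
    have "ln (y $ k) \<le> ln (T * my)" using by'[of k] py myp T unfolding my_def[symmetric]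
      by (simp add: pos_vec_def)
    moreover have "ln mx \<le> ln (x $ k)" using mxl[of k] mxp by simp
    ultimately show ?thesis using gk[of k] T myp by (simp add: ln_mult)
  qed
  have "(MAX k. g k) \<le> ln T + ln mx - ln my" using up by (subst Max_le_iff) auto
  moreover have "ln mx - ln T - ln my \<le> (MIN k. g k)" using lo by (subst Min_ge_iff) auto
  ultimately show ?thesis unfolding hilbert_dist_def g_def[symmetric] by linarith
qed

theorem theorem5:
  fixes f :: "real^'n \<Rightarrow> real^'n"
  assumes "\<forall>x. pos_vec x \<longrightarrow> pos_vec (f x)"
    and "homogeneous_map f"
    and "monotone_pos_map f"
  shows "(\<forall>c>0. hilbert_bounded (super_eigenspace f c)) \<longleftrightarrow> indecomposable f"
proof
  assume "\<forall>c>0. hilbert_bounded (super_eigenspace f c)"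
  then show "indecomposable f" using dir1[OF assms(2,3)] unfolding indecomposable_def by blast
next
  assume ind: "indecomposable f"
  show "\<forall>c>0. hilbert_bounded (super_eigenspace f c)"
  proof (intro allI impI)
    fix c :: real assume c: "c > 0"
    obtain T where T: "T \<ge> 1" "\<forall>x\<in>super_eigenspace f c. \<forall>i. x $ i \<le> T * (MIN k. x $ k)"
      using dir2_bound[OF assms(2,3) ind c] by blast
    show "hilbert_bounded (super_eigenspace f c)" unfolding hilbert_bounded_def
    proof (intro exI ballI)
      fix y z assume "y \<in> super_eigenspace f c" "z \<in> super_eigenspace f c"
      then show "hilbert_dist y z \<le> 2 * ln T"
        using T by (intro dist_bound) (auto simp: super_eigenspace_def)
    qed
  qed
qed

end
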